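(* Let $g(x)=-\log|x|$ on $\mathbb{R}^2$. There exist bounded functions $Q_1,Q_2,Q_3\in C^0(\mathbb{R}^2\setminus\{0\})$ such that for every $\varphi\in C^\infty_c(\mathbb{R}^2;\mathbb{R}^2)$ there exist $G_{1,\varphi},G_{2,\varphi},G_{3,\varphi}\in C^0_0(\mathbb{R}^2\times\mathbb{R}^2)$ with $$\nabla g(x-y)\cdot(\varphi(x)-\varphi(y))=Q_1(x-y)G_{1,\varphi}(x,y)+Q_2(x-y)G_{2,\varphi}(x,y)+Q_3(x-y)G_{3,\varphi}(x,y)$$ for all $x\ne y$; the $Q_i$ do not depend on $\varphi$.
   Context: $C^0_0(\mathbb{R}^2\times\mathbb{R}^2)$ denotes continuous functions vanishing at infinity. *)

theory Defs
  imports "HOL-Analysis.Analysis"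
begin

definition g_log :: "real^2 \<Rightarrow> real" where
  "g_log x = - ln (norm x)"

definition partial_deriv :: "2 \<Rightarrow> (real^2 \<Rightarrow> real) \<Rightarrow> real^2 \<Rightarrow> real" where
  "partial_deriv i f x = frechet_derivative f (at x) (axis i 1)"

definition grad :: "(real^2 \<Rightarrow> real) \<Rightarrow> real^2 \<Rightarrow> real^2" where
  "grad f x = (\<chi> i. partial_deriv i f x)"

fun Ck :: "nat \<Rightarrow> (real^2 \<Rightarrow> real) \<Rightarrow> bool" where
  "Ck 0 f = continuous_on UNIV f"
| "Ck (Suc k) f = (f differentiable_on UNIV \<and> (\<forall>i. Ck k (partial_deriv i f)))"

definition smooth_real :: "(real^2 \<Rightarrow> real) \<Rightarrow> bool" where
  "smooth_real f = (\<forall>k. Ck k f)"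

definition Cinf_c :: "(real^2 \<Rightarrow> real^2) \<Rightarrow> bool" where
  "Cinf_c \<phi> = ((\<forall>j. smooth_real (\<lambda>x. \<phi> x $ j)) \<and> compact (closure {x. \<phi> x \<noteq> 0}))"

definition C00 :: "((real^2) \<times> (real^2) \<Rightarrow> real) \<Rightarrow> bool" where
  "C00 G = (continuous_on UNIV G \<and> (G \<longlongrightarrow> 0) at_infinity)"

end

theory Submission imports Defs begin

lemma lin_expand:
  fixes L :: "real^2 \<Rightarrow> real"
  assumes "linear L"
  shows "L h = h$1 * L (axis 1 1) + h$2 * L (axis 2 1)"
proof -
  have "h = h$1 *\<^sub>R axis 1 1 + h$2 *\<^sub>R axis 2 1"
    by (simp add: vec_eq_iff axis_def forall_2)
  hence "L h = L (h$1 *\<^sub>R axis 1 1 + h$2 *\<^sub>R axis 2 1)" by simp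
  also have "... = h$1 * L (axis 1 1) + h$2 * L (axis 2 1)"
    using assms by (simp add: linear_add linear_scale)
  finally show ?thesis .
qed

definition Dv :: "(real^2 \<Rightarrow> real) \<Rightarrow> real^2 \<Rightarrow> real^2 \<Rightarrow> real" where
  "Dv f y h = h$1 * partial_deriv 1 f y + h$2 * partial_deriv 2 f y"

lemma deriv_Dv:
  assumes "f differentiable_on UNIV"
  shows "(f has_derivative Dv f u) (at u)"
proof -
  have d: "(f has_derivative frechet_derivative f (at u)) (at u)"
    using assms frechet_derivative_works differentiable_on_def by blast
  have "frechet_derivative f (at u) h = Dv f u h" for h
    unfolding lin_expand[OF has_derivative_linear[OF d], of h]
    by (simp add: Dv_def partial_deriv_def)
  hence "frechet_derivative f (at u) = Dv f u" by blast
  thus ?thesis using d by simp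
qed

lemma grad_g:
  assumes "z \<noteq> 0"
  shows "grad g_log z \<bullet> v = - (z \<bullet> v) / (norm z)^2"
proof -
  have "(g_log has_derivative (\<lambda>h. - (z \<bullet> h) / (norm z)^2)) (at z)"
  proof -
    have "((\<lambda>x. - ln (norm x)) has_derivative (\<lambda>h. - (inverse (norm z) * (h \<bullet> sgn z)))) (at z)"
      using assms by (auto intro!: derivative_eq_intros has_derivative_norm)
    moreover have "(\<lambda>h. - (inverse (norm z) * (h \<bullet> sgn z))) = (\<lambda>h. - (z \<bullet> h) / (norm z)^2)"
      using assms by (auto simp: fun_eq_iff power2_eq_square field_simps sgn_div_norm inner_commute)
    ultimately show ?thesis by (simp add: g_log_def[abs_def])
  qed
  hence fd: "frechet_derivative g_log (at z) = (\<lambda>h. - (z \<bullet> h) / (norm z)^2)"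
    using frechet_derivative_at by metis
  show ?thesis
    by (simp add: grad_def partial_deriv_def fd inner_vec_def sum_2 inner_axis' axis_def diff_divide_distrib add_divide_distrib)
qed


lemma Dv_bl: "bounded_linear (Dv f y)"
  unfolding Dv_def[abs_def]
  by (intro bounded_linear_intros bounded_linear_vec_nth)

lemma Dv_diff: "Dv f p x - Dv f p y = Dv f p (x - y)"
  by (simp add: Dv_def algebra_simps)

lemma Dv_bound:
  assumes "\<bar>partial_deriv 1 f u - partial_deriv 1 f y\<bar> \<le> e"
    and "\<bar>partial_deriv 2 f u - partial_deriv 2 f y\<bar> \<le> e"
  shows "\<bar>Dv f u k - Dv f y k\<bar> \<le> 2 * e * norm k"
proof -
  have "\<bar>Dv f u k - Dv f y k\<bar> = \<bar>k$1 * (partial_deriv 1 f u - partial_deriv 1 f y) + k$2 * (partial_deriv 2 f u - partial_deriv 2 f y)\<bar>"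
    by (simp add: Dv_def algebra_simps)
  also have "... \<le> \<bar>k$1\<bar> * \<bar>partial_deriv 1 f u - partial_deriv 1 f y\<bar> + \<bar>k$2\<bar> * \<bar>partial_deriv 2 f u - partial_deriv 2 f y\<bar>"
    by (metis abs_mult abs_triangle_ineq)
  also have "... \<le> norm k * e + norm k * e"
    by (intro add_mono mult_mono component_le_norm_cart assms) auto
  finally show ?thesis by simp
qed

lemma key:
  assumes d: "f differentiable_on UNIV" and c: "\<forall>i. continuous_on UNIV (partial_deriv i f)"
    and e: "\<epsilon> > 0"
  shows "\<exists>\<delta>>0. \<forall>x y. dist x y0 < \<delta> \<longrightarrow> dist y y0 < \<delta> \<longrightarrow>
           \<bar>f x - f y - Dv f y (x - y)\<bar> \<le> \<epsilon> * norm (x - y)"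
proof -
  have e4: "\<epsilon>/4 > 0" using e by simp
  have ci: "isCont (partial_deriv i f) y0" for i
    using c by (simp add: continuous_on_eq_continuous_at)
  have exd: "\<exists>d>0. \<forall>u. dist u y0 < d \<longrightarrow> dist (partial_deriv i f u) (partial_deriv i f y0) < \<epsilon>/4" for i
    using ci[of i, unfolded continuous_at_eps_delta] e4 by blast
  obtain d1 where d1: "d1 > 0" "\<forall>u. dist u y0 < d1 \<longrightarrow> dist (partial_deriv 1 f u) (partial_deriv 1 f y0) < \<epsilon>/4"
    using exd[of 1] by auto
  obtain d2 where d2: "d2 > 0" "\<forall>u. dist u y0 < d2 \<longrightarrow> dist (partial_deriv 2 f u) (partial_deriv 2 f y0) < \<epsilon>/4"
    using exd[of 2] by auto
  define \<delta> where "\<delta> = min d1 d2"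
  have "\<forall>x y. dist x y0 < \<delta> \<longrightarrow> dist y y0 < \<delta> \<longrightarrow>
           \<bar>f x - f y - Dv f y (x - y)\<bar> \<le> \<epsilon> * norm (x - y)"
  proof (intro allI impI)
    fix x y assume x: "dist x y0 < \<delta>" and y: "dist y y0 < \<delta>"
    let ?S = "ball y0 \<delta>"
    define h where "h u = f u - Dv f y u" for u
    have hd0: "(h has_derivative (\<lambda>k. Dv f u k - Dv f y k)) (at u)" for u
      unfolding h_def[abs_def]
      by (rule has_derivative_diff[OF deriv_Dv[OF d] bounded_linear.has_derivative[OF Dv_bl has_derivative_ident]])
    have hd: "(h has_derivative (\<lambda>k. Dv f u k - Dv f y k)) (at u within ?S)" for u
      by (rule has_derivative_at_withinI[OF hd0])
    have ob: "onorm (\<lambda>k. Dv f u k - Dv f y k) \<le> \<epsilon>" if "u \<in> ?S" for u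
    proof (rule onorm_le)
      fix k
      have u: "dist u y0 < d1" "dist u y0 < d2" using that \<delta>_def by (auto simp: dist_commute)
      have yy: "dist y y0 < d1" "dist y y0 < d2" using y \<delta>_def by auto
      have "\<bar>partial_deriv i f u - partial_deriv i f y\<bar> \<le> \<epsilon>/2" if "i = 1 \<or> i = 2" for i
      proof -
        have "\<bar>partial_deriv i f u - partial_deriv i f y0\<bar> < \<epsilon>/4" "\<bar>partial_deriv i f y - partial_deriv i f y0\<bar> < \<epsilon>/4"
          using that d1 d2 u yy by (auto simp: dist_real_def)
        thus ?thesis by linarith
      qed
      from Dv_bound[OF this this, of k]
      show "norm (Dv f u k - Dv f y k) \<le> \<epsilon> * norm k" by simp
    qed
    have "norm (h x - h y) \<le> \<epsilon> * norm (x - y)"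
      by (rule differentiable_bound[OF convex_ball hd ob]) (use x y in \<open>auto simp: dist_commute\<close>)
    moreover have "h x - h y = f x - f y - Dv f y (x - y)"
      unfolding h_def using Dv_diff[of f y x y] by simp
    ultimately show "\<bar>f x - f y - Dv f y (x - y)\<bar> \<le> \<epsilon> * norm (x - y)" by simp
  qed
  moreover have "\<delta> > 0" using d1 d2 \<delta>_def by simp
  ultimately show ?thesis by blast
qed


lemma supp:
  assumes "Cinf_c \<phi>"
  shows "\<exists>M. \<forall>u. norm u > M \<longrightarrow> (\<forall>j. \<phi> u $ j = 0 \<and> (\<forall>i. partial_deriv i (\<lambda>x. \<phi> x $ j) u = 0))"
proof -
  let ?K = "closure {x. \<phi> x \<noteq> 0}"
  have "bounded ?K" using assms unfolding Cinf_c_def by (simp add: compact_imp_bounded)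
  then obtain M where M: "\<forall>x\<in>?K. norm x \<le> M" unfolding bounded_iff by blast
  have "\<forall>j. \<phi> u $ j = 0 \<and> (\<forall>i. partial_deriv i (\<lambda>x. \<phi> x $ j) u = 0)" if u: "norm u > M" for u
  proof -
    have "u \<notin> ?K"
    proof
      assume "u \<in> ?K"
      with M have "norm u \<le> M" by blast
      with u show False by simp
    qed
    hence uK: "u \<in> - ?K" by simp
    have z: "\<phi> v = 0" if "v \<in> - ?K" for v
    proof (rule ccontr)
      assume "\<phi> v \<noteq> 0"
      hence "v \<in> {x. \<phi> x \<noteq> 0}" by simp
      hence "v \<in> ?K" using closure_subset[of "{x. \<phi> x \<noteq> 0}"] by blast
      with that show False by simp
    qed
    have A: "\<phi> u $ j = 0" for j using z[OF uK] by simp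
    have B: "partial_deriv i (\<lambda>x. \<phi> x $ j) u = 0" for i j
    proof -
    have "((\<lambda>x. \<phi> x $ j) has_derivative (\<lambda>h. 0)) (at u)"
    proof (rule has_derivative_transform_within_open[OF has_derivative_const[of 0] _ uK])
      show "open (- ?K)" by (rule open_Compl) (rule closed_closure)
      fix x assume "x \<in> - ?K"
      from z[OF this] have "\<phi> x = 0" .
      thus "0 = \<phi> x $ j" by simp
    qed
    hence "frechet_derivative (\<lambda>x. \<phi> x $ j) (at u) = (\<lambda>h. 0)"
      by (rule frechet_derivative_at[symmetric])
    thus "partial_deriv i (\<lambda>x. \<phi> x $ j) u = 0" by (simp add: partial_deriv_def)
    qed
    show ?thesis using A B by blast
  qed
  thus ?thesis by blast
qed

lemma bnd:
  fixes f :: "real^2 \<Rightarrow> real"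
  assumes "continuous_on UNIV f" "\<forall>u. norm u > M \<longrightarrow> f u = 0"
  shows "\<exists>B. \<forall>u. \<bar>f u\<bar> \<le> B"
proof -
  have "bounded (f ` cball 0 M)"
    by (rule compact_imp_bounded[OF compact_continuous_image[OF continuous_on_subset[OF assms(1)] compact_cball]]) simp
  then obtain B where B: "\<forall>v\<in>f ` cball 0 M. norm v \<le> B" unfolding bounded_iff by blast
  have "\<bar>f u\<bar> \<le> max B 0" for u
  proof (cases "norm u > M")
    case False
    hence "f u \<in> f ` cball 0 M" by auto
    thus ?thesis using B by force
  qed (use assms(2) in auto)
  thus ?thesis by blast
qed

lemma vanish:
  fixes G :: "(real^2) \<times> (real^2) \<Rightarrow> real"
  assumes A: "\<forall>x y. norm x > M \<and> norm y > M \<longrightarrow> G (x,y) = 0"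
    and B: "\<forall>x y. norm (x-y) \<ge> 2 \<longrightarrow> \<bar>G (x,y)\<bar> \<le> B / norm (x-y)"
  shows "(G \<longlongrightarrow> 0) at_infinity"
proof (rule tendstoI)
  fix e :: real assume e: "e > 0"
  define T where "T = 2 + \<bar>B\<bar> / e"
  have T2: "T \<ge> 2" using e by (simp add: T_def)
  show "\<forall>\<^sub>F p in at_infinity. dist (G p) 0 < e"
    unfolding eventually_at_infinity
  proof (intro exI allI impI)
    fix p :: "(real^2) \<times> (real^2)"
    assume p: "2 * \<bar>M\<bar> + T + 1 \<le> norm p"
    obtain x y where pxy: "p = (x,y)" by (cases p)
    have s: "norm x + norm y \<ge> 2 * \<bar>M\<bar> + T + 1" using p norm_Pair_le[of x y] pxy by simp
    show "dist (G p) 0 < e"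
    proof (cases "norm (x - y) > T")
      case True
      hence n2: "norm (x-y) \<ge> 2" using T2 by simp
      have "\<bar>B\<bar> / e < norm (x - y)" using True T_def by simp
      hence "\<bar>B\<bar> < e * norm (x - y)" using e by (simp add: field_simps)
      hence "\<bar>B\<bar> / norm (x - y) < e" using n2 by (subst pos_divide_less_eq) (auto simp: mult.commute)
      moreover have "B / norm (x-y) \<le> \<bar>B\<bar> / norm (x - y)" by (simp add: divide_right_mono)
      ultimately show ?thesis using B n2 pxy by (simp add: dist_real_def) (smt (verit))
    next
      case False
      have "norm x \<le> norm y + norm (x - y)" by (metis norm_triangle_sub add.commute)
      moreover have "norm y \<le> norm x + norm (x - y)" by (metis norm_minus_commute norm_triangle_sub add.commute)
      ultimately have "norm x > M" "norm y > M" using s False by linarith+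
      thus ?thesis using A pxy e by simp
    qed
  qed
qed

definition cut :: "real^2 \<Rightarrow> real" where "cut z = min 1 (max 0 (2 - norm z))"

lemma C00_add: "C00 F \<Longrightarrow> C00 G \<Longrightarrow> C00 (\<lambda>p. F p + G p)"
  unfolding C00_def by (auto intro: continuous_on_add tendsto_add[where a=0 and b=0, simplified])

lemma H_C00:
  assumes c: "continuous_on UNIV P" and z: "\<forall>u. norm u > M \<longrightarrow> P u = 0"
  shows "C00 (\<lambda>p. - cut (fst p - snd p) * P (snd p))"
  unfolding C00_def
proof
  have c2: "continuous_on UNIV (\<lambda>p::(real^2)\<times>(real^2). P (snd p))"
    by (rule continuous_on_compose2[OF c continuous_on_snd]) auto
  show "continuous_on UNIV (\<lambda>p::(real^2)\<times>(real^2). - cut (fst p - snd p) * P (snd p))"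
    unfolding cut_def by (intro continuous_intros c2)
  show "((\<lambda>p::(real^2)\<times>(real^2). - cut (fst p - snd p) * P (snd p)) \<longlongrightarrow> 0) at_infinity"
    by (rule vanish[where M=M and B=0]) (auto simp: z cut_def)
qed


definition Nf :: "(real^2 \<Rightarrow> real) \<Rightarrow> real^2 \<Rightarrow> real^2 \<Rightarrow> real" where
  "Nf f x y = f x - f y - cut (x - y) * Dv f y (x - y)"

definition Wf :: "(real^2 \<Rightarrow> real) \<Rightarrow> (real^2 \<Rightarrow> real) \<Rightarrow> (real^2) \<times> (real^2) \<Rightarrow> real" where
  "Wf a b p = (if fst p = snd p then 0 else
     - ((fst p - snd p)$1 * Nf a (fst p) (snd p) + (fst p - snd p)$2 * Nf b (fst p) (snd p)) / (norm (fst p - snd p))^2)"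

definition good :: "(real^2 \<Rightarrow> real) \<Rightarrow> real \<Rightarrow> bool" where
  "good f M = (f differentiable_on UNIV \<and> (\<forall>i. continuous_on UNIV (partial_deriv i f)) \<and>
      (\<forall>u. norm u > M \<longrightarrow> f u = 0 \<and> (\<forall>i. partial_deriv i f u = 0)))"

lemma Wbound:
  assumes "x \<noteq> y"
  shows "\<bar>Wf a b (x,y)\<bar> \<le> (\<bar>Nf a x y\<bar> + \<bar>Nf b x y\<bar>) / norm (x - y)"
proof -
  let ?z = "x - y"
  have n: "norm ?z > 0" using assms by simp
  have "\<bar>?z$1 * Nf a x y + ?z$2 * Nf b x y\<bar> \<le> \<bar>?z$1\<bar> * \<bar>Nf a x y\<bar> + \<bar>?z$2\<bar> * \<bar>Nf b x y\<bar>"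
    by (metis abs_mult abs_triangle_ineq)
  also have "... \<le> norm ?z * \<bar>Nf a x y\<bar> + norm ?z * \<bar>Nf b x y\<bar>"
    by (intro add_mono mult_right_mono component_le_norm_cart) auto
  finally have "\<bar>?z$1 * Nf a x y + ?z$2 * Nf b x y\<bar> / (norm ?z)^2 \<le> norm ?z * (\<bar>Nf a x y\<bar> + \<bar>Nf b x y\<bar>) / (norm ?z)^2"
    by (simp add: divide_right_mono algebra_simps)
  also have "... = (\<bar>Nf a x y\<bar> + \<bar>Nf b x y\<bar>) / norm ?z"
    using n by (simp add: power2_eq_square)
  moreover have "Wf a b (x,y) = - (?z$1 * Nf a x y + ?z$2 * Nf b x y) / (norm ?z)^2"
    by (simp only: Wf_def fst_conv snd_conv if_not_P[OF assms])
  ultimately show ?thesis by (simp only: abs_divide abs_minus_cancel abs_power2 abs_norm_cancel)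
qed

lemma good_cont: "good f M \<Longrightarrow> continuous_on UNIV f"
  unfolding good_def by (simp add: differentiable_imp_continuous_on)

lemma W_C00:
  assumes ga: "good a M" and gb: "good b M"
  shows "C00 (Wf a b)"
  unfolding C00_def
proof
  have ca: "continuous_on UNIV a" and cb: "continuous_on UNIV b" using ga gb good_cont by auto
  have cpa: "continuous_on UNIV (partial_deriv i a)" and cpb: "continuous_on UNIV (partial_deriv i b)" for i
    using ga gb unfolding good_def by auto
  have c1: "continuous_on S (\<lambda>p. f (fst p))" "continuous_on S (\<lambda>p. f (snd p))"
    if "continuous_on UNIV f" for f :: "real^2 \<Rightarrow> real" and S :: "((real^2) \<times> (real^2)) set"
    by (rule continuous_on_compose2[OF that continuous_on_fst]; auto)
       (rule continuous_on_compose2[OF that continuous_on_snd]; auto)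
  have "isCont (Wf a b) p" for p
  proof (cases "fst p = snd p")
    case False
    define F where "F p = - ((fst p - snd p)$1 * Nf a (fst p) (snd p) + (fst p - snd p)$2 * Nf b (fst p) (snd p)) / (norm (fst p - snd p))^2" for p :: "(real^2) \<times> (real^2)"
    let ?U = "{p :: (real^2) \<times> (real^2). fst p \<noteq> snd p}"
    have oU: "open ?U" by (intro open_Collect_neq continuous_intros)
    have "continuous_on ?U F"
      unfolding F_def Nf_def Dv_def cut_def
      by (intro continuous_intros c1 ca cb cpa cpb) auto
    hence "isCont F p" using oU False continuous_on_eq_continuous_at by blast
    moreover have "eventually (\<lambda>q. Wf a b q = F q) (nhds p)"
      unfolding eventually_nhds using oU False by (intro exI[of _ ?U]) (auto simp: Wf_def F_def)
    ultimately show ?thesis using isCont_cong by blast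
  next
    case True
    then obtain y0 where p: "p = (y0, y0)" by (metis prod.collapse)
    show ?thesis unfolding continuous_at_eps_delta
    proof (intro allI impI)
      fix e :: real assume e: "e > 0"
      have e4: "e/4 > 0" using e by simp
      obtain da where da: "da > 0" "\<forall>x y. dist x y0 < da \<longrightarrow> dist y y0 < da \<longrightarrow> \<bar>a x - a y - Dv a y (x - y)\<bar> \<le> e/4 * norm (x - y)"
        using key[OF _ _ e4, of a y0] ga unfolding good_def by blast
      obtain db where db: "db > 0" "\<forall>x y. dist x y0 < db \<longrightarrow> dist y y0 < db \<longrightarrow> \<bar>b x - b y - Dv b y (x - y)\<bar> \<le> e/4 * norm (x - y)"
        using key[OF _ _ e4, of b y0] gb unfolding good_def by blast
      show "\<exists>d>0. \<forall>q. dist q p < d \<longrightarrow> dist (Wf a b q) (Wf a b p) < e"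
      proof (intro exI[of _ "min (min da db) (1/2)"] conjI allI impI)
        show "min (min da db) (1/2) > 0" using da db by simp
        fix q assume q: "dist q p < min (min da db) (1/2)"
        obtain x y where qxy: "q = (x,y)" by (cases q)
        have dx: "dist x y0 < min (min da db) (1/2)" using q qxy p dist_fst_le[of q p] by simp
        have dy: "dist y y0 < min (min da db) (1/2)" using q qxy p dist_snd_le[of q p] by simp
        have Wp: "Wf a b p = 0" using p by (simp add: Wf_def)
        show "dist (Wf a b q) (Wf a b p) < e"
        proof (cases "x = y")
          case True thus ?thesis using Wp qxy e by (simp add: Wf_def)
        next
          case False
          have "norm (x - y) \<le> dist x y0 + dist y y0"
            by (metis dist_norm dist_triangle2)
          hence "norm (x - y) \<le> 1" using dx dy by linarith
          hence cu: "cut (x - y) = 1" by (simp add: cut_def)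
          have Na: "\<bar>Nf a x y\<bar> \<le> e/4 * norm (x - y)" using da dx dy cu by (simp add: Nf_def)
          have Nb: "\<bar>Nf b x y\<bar> \<le> e/4 * norm (x - y)" using db dx dy cu by (simp add: Nf_def)
          have "\<bar>Wf a b (x,y)\<bar> \<le> (\<bar>Nf a x y\<bar> + \<bar>Nf b x y\<bar>) / norm (x - y)" by (rule Wbound[OF False])
          also have "... \<le> (e/4 * norm (x - y) + e/4 * norm (x - y)) / norm (x - y)"
            by (intro divide_right_mono add_mono Na Nb) simp
          also have "... = e/2" using False by (simp add: field_simps)
          finally show ?thesis using Wp qxy e by simp
        qed
      qed
    qed
  qed
  thus "continuous_on UNIV (Wf a b)" by (simp add: continuous_at_imp_continuous_on)
  obtain Ba where Ba: "\<forall>u. \<bar>a u\<bar> \<le> Ba" using bnd[OF ca, of M] ga unfolding good_def by blast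
  obtain Bb where Bb: "\<forall>u. \<bar>b u\<bar> \<le> Bb" using bnd[OF cb, of M] gb unfolding good_def by blast
  show "(Wf a b \<longlongrightarrow> 0) at_infinity"
  proof (rule vanish[where M=M and B="2*Ba + 2*Bb"])
    show "\<forall>x y. norm x > M \<and> norm y > M \<longrightarrow> Wf a b (x,y) = 0"
      using ga gb unfolding good_def by (auto simp: Wf_def Nf_def Dv_def)
    show "\<forall>x y. norm (x-y) \<ge> 2 \<longrightarrow> \<bar>Wf a b (x,y)\<bar> \<le> (2*Ba + 2*Bb) / norm (x-y)"
    proof (intro allI impI)
      fix x y :: "real^2" assume n: "norm (x-y) \<ge> 2"
      hence xy: "x \<noteq> y" by auto
      have cu: "cut (x - y) = 0" using n by (simp add: cut_def)
      have "\<bar>Nf a x y\<bar> \<le> 2 * Ba" using cu Ba[rule_format, of x] Ba[rule_format, of y] by (simp add: Nf_def)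
      moreover have "\<bar>Nf b x y\<bar> \<le> 2 * Bb" using cu Bb[rule_format, of x] Bb[rule_format, of y] by (simp add: Nf_def)
      ultimately have "(\<bar>Nf a x y\<bar> + \<bar>Nf b x y\<bar>) / norm (x - y) \<le> (2*Ba + 2*Bb) / norm (x-y)"
        by (intro divide_right_mono) auto
      thus "\<bar>Wf a b (x,y)\<bar> \<le> (2*Ba + 2*Bb) / norm (x-y)" using Wbound[OF xy, of a b] by linarith
    qed
  qed
qed


lemma alg:
  fixes z1 z2 n c da db pa1 pa2 pb1 pb2 W :: real
  assumes n: "n = z1^2 + z2^2" "n \<noteq> 0"
    and W: "W = - (z1 * (da - c * (z1 * pa1 + z2 * pa2)) + z2 * (db - c * (z1 * pb1 + z2 * pb2))) / n"
  shows "- (z1 * da + z2 * db) / n = z1^2 / n * (- c * pa1 + W) + z1 * z2 / n * (- c * (pa2 + pb1)) + z2^2 / n * (- c * pb2 + W)"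
proof -
  let ?X = "z1^2 * pa1 + z1 * z2 * (pa2 + pb1) + z2^2 * pb2"
  have nW: "n * W = - (z1 * (da - c * (z1 * pa1 + z2 * pa2)) + z2 * (db - c * (z1 * pb1 + z2 * pb2)))"
    using n(2) unfolding W by simp
  have "z1^2 / n * (- c * pa1 + W) + z1 * z2 / n * (- c * (pa2 + pb1)) + z2^2 / n * (- c * pb2 + W)
      = ((z1^2 + z2^2) * W - c * ?X) / n"
    using n(2) by (simp add: field_simps)
  also have "... = (n * W - c * ?X) / n" using n(1) by simp
  also have "n * W - c * ?X = - (z1 * da + z2 * db)"
    unfolding nW by (simp add: algebra_simps power2_eq_square)
  finally show ?thesis by simp
qed

lemma norm2: "(norm (z::real^2))^2 = (z$1)^2 + (z$2)^2"
  by (simp only: power2_norm_eq_inner) (simp add: inner_vec_def sum_2 power2_eq_square)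

lemma good_phi:
  assumes "Cinf_c \<phi>"
  shows "\<exists>M. good (\<lambda>x. \<phi> x $ 1) M \<and> good (\<lambda>x. \<phi> x $ 2) M"
proof -
  obtain M where M: "\<forall>u. norm u > M \<longrightarrow> (\<forall>j. \<phi> u $ j = 0 \<and> (\<forall>i. partial_deriv i (\<lambda>x. \<phi> x $ j) u = 0))"
    using supp[OF assms] by blast
  have "Ck 1 (\<lambda>x. \<phi> x $ j)" for j using assms unfolding Cinf_c_def smooth_real_def by blast
  hence "good (\<lambda>x. \<phi> x $ j) M" for j using M unfolding good_def by simp
  thus ?thesis by blast
qed

theorem lemma6p2:
  "\<exists>Q1 Q2 Q3 :: real^2 \<Rightarrow> real.
     (\<forall>Q\<in>{Q1, Q2, Q3}. continuous_on (UNIV - {0}) Q \<and> bounded (Q ` (UNIV - {0}))) \<and>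
     (\<forall>\<phi>. Cinf_c \<phi> \<longrightarrow>
        (\<exists>G1 G2 G3. C00 G1 \<and> C00 G2 \<and> C00 G3 \<and>
           (\<forall>x y. x \<noteq> y \<longrightarrow>
              grad g_log (x - y) \<bullet> (\<phi> x - \<phi> y)
              = Q1 (x - y) * G1 (x, y) + Q2 (x - y) * G2 (x, y) + Q3 (x - y) * G3 (x, y))))"
proof -
  let ?Q1 = "\<lambda>z::real^2. (z$1)^2 / (norm z)^2"
  let ?Q2 = "\<lambda>z::real^2. z$1 * z$2 / (norm z)^2"
  let ?Q3 = "\<lambda>z::real^2. (z$2)^2 / (norm z)^2"
  have P1: "continuous_on (UNIV - {0}) Q \<and> bounded (Q ` (UNIV - {0}))" if Q: "Q \<in> {?Q1, ?Q2, ?Q3}" for Q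
  proof -
  have b: "\<bar>z$i * z$j\<bar> \<le> (norm z)^2" for z :: "real^2" and i j
    unfolding abs_mult power2_eq_square by (intro mult_mono component_le_norm_cart) auto
  have sq: "(z$i)^2 / (norm z)^2 \<le> 1" for z :: "real^2" and i
  proof (cases "z = 0")
    case False
    have "\<bar>z$i\<bar>^2 \<le> (norm z)^2" by (rule power_mono[OF component_le_norm_cart]) simp
    thus ?thesis using False by (simp add: divide_le_eq_1)
  qed simp
  have pr: "\<bar>z$1 * z$2\<bar> / (norm z)^2 \<le> 1" for z :: "real^2"
  proof (cases "z = 0")
    case False
    thus ?thesis using b[of z 1 2] by (simp add: divide_le_eq_1)
  qed simp
  have "\<bar>Q z\<bar> \<le> 1" for z
  proof -
    from Q consider "Q = ?Q1" | "Q = ?Q2" | "Q = ?Q3" by blast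
    thus ?thesis
    proof cases
      case 1 thus ?thesis using sq[of z 1] by simp
    next
      case 2 thus ?thesis using pr[of z] by (simp add: abs_divide)
    next
      case 3 thus ?thesis using sq[of z 2] by simp
    qed
  qed
  hence "bounded (Q ` (UNIV - {0}))" unfolding bounded_iff by auto
  moreover have "continuous_on (UNIV - {0}) Q"
    using Q by (auto intro!: continuous_intros)
  ultimately show "continuous_on (UNIV - {0}) Q \<and> bounded (Q ` (UNIV - {0}))" by blast
  qed
  have P2: "\<exists>G1 G2 G3. C00 G1 \<and> C00 G2 \<and> C00 G3 \<and>
           (\<forall>x y. x \<noteq> y \<longrightarrow>
              grad g_log (x - y) \<bullet> (\<phi> x - \<phi> y)
              = ?Q1 (x - y) * G1 (x, y) + ?Q2 (x - y) * G2 (x, y) + ?Q3 (x - y) * G3 (x, y))"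
    if phi: "Cinf_c \<phi>" for \<phi> :: "real^2 \<Rightarrow> real^2"
  proof -
  define a where "a = (\<lambda>x. \<phi> x $ 1)"
  define b where "b = (\<lambda>x. \<phi> x $ 2)"
  obtain M where ga: "good a M" and gb: "good b M" using good_phi[OF phi] unfolding a_def b_def by blast
  have pc: "continuous_on UNIV (partial_deriv i f)" "\<forall>u. norm u > M \<longrightarrow> partial_deriv i f u = 0"
    if "good f M" for f i using that unfolding good_def by auto
  let ?G1 = "\<lambda>p. - cut (fst p - snd p) * partial_deriv 1 a (snd p) + Wf a b p"
  let ?G2 = "\<lambda>p. - cut (fst p - snd p) * (partial_deriv 2 a (snd p) + partial_deriv 1 b (snd p))"
  let ?G3 = "\<lambda>p. - cut (fst p - snd p) * partial_deriv 2 b (snd p) + Wf a b p"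
  have C1: "C00 ?G1" by (rule C00_add[OF H_C00[OF pc(1)[OF ga] pc(2)[OF ga]] W_C00[OF ga gb]])
  have C3: "C00 ?G3" by (rule C00_add[OF H_C00[OF pc(1)[OF gb] pc(2)[OF gb]] W_C00[OF ga gb]])
  have C2: "C00 ?G2"
  proof (rule H_C00[where M=M])
    show "continuous_on UNIV (\<lambda>u. partial_deriv 2 a u + partial_deriv 1 b u)"
      by (intro continuous_on_add pc[OF ga] pc[OF gb])
    show "\<forall>u. norm u > M \<longrightarrow> partial_deriv 2 a u + partial_deriv 1 b u = 0"
      using pc(2)[OF ga] pc(2)[OF gb] by auto
  qed
  have EQ: "grad g_log (x - y) \<bullet> (\<phi> x - \<phi> y) = ?Q1 (x - y) * ?G1 (x, y) + ?Q2 (x - y) * ?G2 (x, y) + ?Q3 (x - y) * ?G3 (x, y)"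
    if xy: "x \<noteq> y" for x y
  proof -
    let ?z = "x - y"
    have z0: "?z \<noteq> 0" using xy by simp
    have lhs: "grad g_log ?z \<bullet> (\<phi> x - \<phi> y) = - (?z$1 * (a x - a y) + ?z$2 * (b x - b y)) / (norm ?z)^2"
      by (simp only: grad_g[OF z0]) (simp add: inner_vec_def sum_2 a_def b_def)
    have W: "Wf a b (x,y) = - (?z$1 * (a x - a y - cut ?z * (?z$1 * partial_deriv 1 a y + ?z$2 * partial_deriv 2 a y))
        + ?z$2 * (b x - b y - cut ?z * (?z$1 * partial_deriv 1 b y + ?z$2 * partial_deriv 2 b y))) / (norm ?z)^2"
      by (simp only: Wf_def fst_conv snd_conv if_not_P[OF xy] Nf_def Dv_def)
    show "grad g_log ?z \<bullet> (\<phi> x - \<phi> y) = ?Q1 ?z * ?G1 (x, y) + ?Q2 ?z * ?G2 (x, y) + ?Q3 ?z * ?G3 (x, y)"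
      unfolding lhs fst_conv snd_conv
      by (rule alg[OF norm2 _ W]) (use z0 in simp)
  qed
  show "\<exists>G1 G2 G3. C00 G1 \<and> C00 G2 \<and> C00 G3 \<and>
           (\<forall>x y. x \<noteq> y \<longrightarrow>
              grad g_log (x - y) \<bullet> (\<phi> x - \<phi> y)
              = ?Q1 (x - y) * G1 (x, y) + ?Q2 (x - y) * G2 (x, y) + ?Q3 (x - y) * G3 (x, y))"
    apply (rule exI[of _ ?G1], rule exI[of _ ?G2], rule exI[of _ ?G3])
    using C1 C2 C3 EQ by blast
  qed
  have A1: "\<forall>Q\<in>{?Q1, ?Q2, ?Q3}. continuous_on (UNIV - {0}) Q \<and> bounded (Q ` (UNIV - {0}))"
    using P1 by blast
  have A2: "\<forall>\<phi>. Cinf_c \<phi> \<longrightarrow>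
        (\<exists>G1 G2 G3. C00 G1 \<and> C00 G2 \<and> C00 G3 \<and>
           (\<forall>x y. x \<noteq> y \<longrightarrow>
              grad g_log (x - y) \<bullet> (\<phi> x - \<phi> y)
              = ?Q1 (x - y) * G1 (x, y) + ?Q2 (x - y) * G2 (x, y) + ?Q3 (x - y) * G3 (x, y)))"
    using P2 by blast
  show ?thesis
    by (rule exI[of _ ?Q1], rule exI[of _ ?Q2], rule exI[of _ ?Q3], rule conjI[OF A1 A2])
qed

end
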